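(* Let $1<p<\infty$, $0<\varepsilon<1$, let $\Omega\subset\mathbb{H}^n$ be a domain, $u$ a $p$-harmonic function in $\Omega$, $U\Subset\Omega$ a smooth domain, and let $u^\varepsilon\in C^\infty(U)$ be a solution of $$\sum_{i=1}^{2n}X_i\big[(\varepsilon+|Xv|^2)^{\frac{p-2}{2}}X_iv\big]=0\ \text{ in } U,\qquad v-u\in HW^{1,p}_0(U).$$ Then $$\Big[\frac{n}{(p-2)^2}+\frac{1}{p-2}-(n-1)\Big](\Delta_0u^\varepsilon)^2\le\frac{2n-1}{2}\Big[|D_0^2u^\varepsilon|^2-(\Delta_0u^\varepsilon)^2\Big]\quad\text{in } U,$$ where, when $p=2$, the convention $\frac10=\infty$ and $\infty\cdot 0=0$ is used.
   Context: The Heisenberg group $\mathbb{H}^n$ is $\mathbb{R}^{2n}\times\mathbb{R}$ with the group law $(x,t)\cdot(x',t')=(x+x',\,t+t'-\frac12\sum_{i=1}^n[x_ix'_{i+n}-x_{i+n}x'_i])$, with left-invariant vector fields $X_i=\partial_{x_i}-\frac{x_{i+n}}{2}\partial_t$, $X_{i+n}=\partial_{x_{i+n}}+\frac{x_i}{2}\partial_t$ ($i=1,\dots,n$). For a function $v$, $Xv=(X_1v,\dots,X_{2n}v)$, $|Xv|$ its Euclidean norm, $\Delta_0v=\sum_{i=1}^{2n}X_iX_iv$, and $D_0^2v=\big(\frac12[X_iX_jv+X_jX_iv]\big)_{i,j=1}^{2n}$ the symmetrized horizontal Hessian with $|D_0^2v|$ its Frobenius norm. $HW^{1,p}_0(U)$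 is the closure of $C^\infty_c(U)$ in the norm $(\|v\|_{L^p}^p+\||Xv|\|_{L^p}^p)^{1/p}$. A $p$-harmonic function in $\Omega$ is $u\in HW^{1,p}_{\rm loc}(\Omega)$ (i.e. $u,Xu$ locally $p$-integrable) with $\int_\Omega|Xu|^{p-2}\langle Xu,X\phi\rangle dx=0$ for all $\phi\in C^\infty_c(\Omega)$. *)

theory Defs
  imports "HOL-Analysis.Analysis"
begin

text \<open>Points of the Heisenberg group H^n = R^{2n} x R are represented as ((a,b),t) with
  a = (x_1..x_n), b = (x_{n+1}..x_{2n}), t the vertical coordinate; n = CARD('n).\<close>

type_synonym ('n) heis = "((real^('n::finite)) \<times> (real^'n)) \<times> real"

text \<open>Horizontal left-invariant vector field in horizontal direction e (e ranges over the
  standard basis of R^{2n} = real^'n x real^'n): for e = (axis i 1, 0) this is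
  X_i = d/dx_i - x_{i+n}/2 d/dt; for e = (0, axis i 1) this is X_{i+n} = d/dx_{i+n} + x_i/2 d/dt.\<close>

definition hfield :: "((real^('n::finite)) \<times> (real^'n)) \<Rightarrow> 'n heis \<Rightarrow> 'n heis" where
  "hfield e p = (e, ((snd e \<bullet> fst (fst p)) - (fst e \<bullet> snd (fst p))) / 2)"

definition hder :: "((real^('n::finite)) \<times> (real^'n)) \<Rightarrow> ('n heis \<Rightarrow> real) \<Rightarrow> 'n heis \<Rightarrow> real" where
  "hder e v p = frechet_derivative v (at p) (hfield e p)"

definition hgrad :: "(('n::finite) heis \<Rightarrow> real) \<Rightarrow> 'n heis \<Rightarrow> ((real^'n) \<times> (real^'n))" where
  "hgrad v p = (\<Sum>e\<in>Basis. hder e v p *\<^sub>R e)"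

definition hlap :: "(('n::finite) heis \<Rightarrow> real) \<Rightarrow> 'n heis \<Rightarrow> real" where
  "hlap v p = (\<Sum>e\<in>Basis. hder e (hder e v) p)"

definition hhess_sq :: "(('n::finite) heis \<Rightarrow> real) \<Rightarrow> 'n heis \<Rightarrow> real" where
  "hhess_sq v p = (\<Sum>e\<in>Basis. \<Sum>e'\<in>Basis. ((hder e (hder e' v) p + hder e' (hder e v) p) / 2)\<^sup>2)"

definition pder :: "'a::euclidean_space \<Rightarrow> ('a \<Rightarrow> real) \<Rightarrow> 'a \<Rightarrow> real" where
  "pder b f x = frechet_derivative f (at x) b"

definition smooth_on :: "'a::euclidean_space set \<Rightarrow> ('a \<Rightarrow> real) \<Rightarrow> bool" where
  "smooth_on U f \<longleftrightarrow> (\<forall>bs. set bs \<subseteq> Basis \<longrightarrow> (foldr pder bs f) differentiable_on U)"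

definition test_fun :: "'a::euclidean_space set \<Rightarrow> ('a \<Rightarrow> real) \<Rightarrow> bool" where
  "test_fun U \<phi> \<longleftrightarrow> smooth_on UNIV \<phi> \<and> compact (closure {x. \<phi> x \<noteq> 0})
      \<and> closure {x. \<phi> x \<noteq> 0} \<subseteq> U"

text \<open>g is the weak horizontal gradient of u on \<Omega> (using X_j^* = -X_j).\<close>
definition weak_hgrad :: "('n::finite) heis set \<Rightarrow> ('n heis \<Rightarrow> real) \<Rightarrow> ('n heis \<Rightarrow> (real^'n) \<times> (real^'n)) \<Rightarrow> bool" where
  "weak_hgrad \<Omega> u g \<longleftrightarrow> (\<forall>\<phi>. test_fun \<Omega> \<phi> \<longrightarrow> (\<forall>e\<in>Basis.
      (\<integral>x\<in>\<Omega>. u x * (hgrad \<phi> x \<bullet> e) \<partial>lborel) = - (\<integral>x\<in>\<Omega>. (g x \<bullet> e) * \<phi> x \<partial>lborel)))"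

definition HW_loc :: "real \<Rightarrow> ('n::finite) heis set \<Rightarrow> ('n heis \<Rightarrow> real) \<Rightarrow> ('n heis \<Rightarrow> (real^'n) \<times> (real^'n)) \<Rightarrow> bool" where
  "HW_loc p \<Omega> u g \<longleftrightarrow> set_borel_measurable lborel \<Omega> u \<and> set_borel_measurable lborel \<Omega> g
     \<and> (\<forall>K. compact K \<and> K \<subseteq> \<Omega> \<longrightarrow>
          (\<integral>\<^sup>+x\<in>K. ennreal (\<bar>u x\<bar> powr p) \<partial>lborel) < \<infinity>
        \<and> (\<integral>\<^sup>+x\<in>K. ennreal (norm (g x) powr p) \<partial>lborel) < \<infinity>)
     \<and> weak_hgrad \<Omega> u g"

definition p_harmonic :: "real \<Rightarrow> ('n::finite) heis set \<Rightarrow> ('n heis \<Rightarrow> real) \<Rightarrow> bool" where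
  "p_harmonic p \<Omega> u \<longleftrightarrow> (\<exists>g. HW_loc p \<Omega> u g \<and>
     (\<forall>\<phi>. test_fun \<Omega> \<phi> \<longrightarrow>
        (\<integral>x\<in>\<Omega>. norm (g x) powr (p - 2) * (g x \<bullet> hgrad \<phi> x) \<partial>lborel) = 0))"

definition HW0 :: "real \<Rightarrow> ('n::finite) heis set \<Rightarrow> ('n heis \<Rightarrow> real) \<Rightarrow> bool" where
  "HW0 p U w \<longleftrightarrow> (\<exists>\<phi> g. set_borel_measurable lborel U w \<and> set_borel_measurable lborel U g
     \<and> (\<forall>k. test_fun U (\<phi> k))
     \<and> ((\<lambda>k. (\<integral>\<^sup>+x\<in>U. ennreal (\<bar>\<phi> k x - w x\<bar> powr p) \<partial>lborel)
              + (\<integral>\<^sup>+x\<in>U. ennreal (norm (hgrad (\<phi> k) x - g x) powr p) \<partial>lborel)) \<longlonglongrightarrow> 0))"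

definition smooth_domain :: "'a::euclidean_space set \<Rightarrow> bool" where
  "smooth_domain U \<longleftrightarrow> open U \<and> connected U \<and> U \<noteq> {} \<and>
     (\<exists>\<rho>. smooth_on UNIV \<rho> \<and> U = {x. \<rho> x < 0} \<and>
        (\<forall>x\<in>frontier U. \<rho> x = 0 \<and> (\<exists>b\<in>Basis. pder b \<rho> x \<noteq> 0)))"

definition coef :: "real \<Rightarrow> real \<Rightarrow> ereal" where
  "coef n p = (if p = 2 then \<infinity> else ereal (n / (p - 2)\<^sup>2 + 1 / (p - 2) - (n - 1)))"

end

theory Submission
  imports Defs
begin


lemma hfield_eq: "hfield e y = (e, 0) + ((snd e \<bullet> fst (fst y) - fst e \<bullet> snd (fst y)) / 2) *\<^sub>R ((0, 0), 1)"
  by (simp add: hfield_def zero_prod_def)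

lemma hder_pder:
  fixes v :: "('n::finite) heis \<Rightarrow> real"
  assumes "v differentiable (at y)"
  shows "hder e v y = pder (e, 0) v y + ((snd e \<bullet> fst (fst y) - fst e \<bullet> snd (fst y)) / 2) * pder ((0, 0), 1) v y"
proof -
  have lin: "linear (frechet_derivative v (at y))" using assms by (rule linear_frechet_derivative)
  show ?thesis unfolding hder_def pder_def hfield_eq linear_add[OF lin] linear_scale[OF lin]
    by simp
qed

lemma basis1: "(e::(real^('n::finite)) \<times> (real^'n)) \<in> Basis \<Longrightarrow> ((e, 0) :: 'n heis) \<in> Basis"
  by (simp add: Basis_prod_def)

lemma basis2: "(((0, 0), 1) :: ('n::finite) heis) \<in> Basis"
  by (simp add: Basis_prod_def zero_prod_def[symmetric])

lemma smooth_hder_diff: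
  fixes v :: "('n::finite) heis \<Rightarrow> real"
  assumes sm: "smooth_on U v" and U: "open U" and x: "x \<in> U" and e: "e \<in> Basis"
  shows "hder e v differentiable (at x)"
proof -
  have d0: "v differentiable_on U" using sm unfolding smooth_on_def by (metis empty_subsetI foldr_Nil id_apply list.set(1))
  have d1: "pder b v differentiable_on U" if "b \<in> Basis" for b
    using sm that unfolding smooth_on_def
    by (metis (no_types, lifting) empty_subsetI foldr_Cons foldr_Nil id_apply insert_subset list.set(1) list.set(2) o_apply)
  define c where "c y = (snd e \<bullet> fst (fst y) - fst e \<bullet> snd (fst y)) / 2" for y :: "'n heis"
  define g where "g y = pder (e, 0) v y + c y * pder ((0, 0), 1) v y" for y
  have eq: "\<forall>y\<in>U. hder e v y = g y"
  proof
    fix y assume "y \<in> U"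
    then have "v differentiable (at y)" using d0 U differentiable_on_eq_differentiable_at by blast
    then show "hder e v y = g y" unfolding g_def c_def by (rule hder_pder)
  qed
  have cd: "((\<lambda>y. c y) has_derivative (\<lambda>h. c h)) (at x)"
    unfolding c_def by (auto intro!: derivative_eq_intros)
  have p1: "pder (e, 0) v differentiable (at x)"
    using d1[OF basis1[OF e]] U x differentiable_on_eq_differentiable_at by blast
  have p2: "pder ((0, 0), 1) v differentiable (at x)"
    using d1[OF basis2] U x differentiable_on_eq_differentiable_at by blast
  have "g differentiable (at x)"
    unfolding g_def using p1 p2 differentiableI[OF cd]
    by (intro differentiable_add differentiable_mult) auto
  then obtain D where "(g has_derivative D) (at x)" unfolding differentiable_def by blast
  then have "(hder e v has_derivative D) (at x)"
    by (rule has_derivative_transform_within_open[OF _ U x]) (use eq in auto)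
  then show ?thesis by (rule differentiableI)
qed

lemma norm_hgrad_sq:
  "(norm (hgrad v y))\<^sup>2 = (\<Sum>b\<in>Basis. (hder b v y)\<^sup>2)"
proof -
  have "(norm (hgrad v y))\<^sup>2 = hgrad v y \<bullet> hgrad v y" by (simp add: power2_norm_eq_inner)
  also have "\<dots> = (\<Sum>b\<in>Basis. (hgrad v y \<bullet> b) * (hgrad v y \<bullet> b))" by (rule euclidean_inner)
  also have "\<dots> = (\<Sum>b\<in>Basis. (hder b v y)\<^sup>2)"
    by (intro sum.cong) (auto simp: hgrad_def power2_eq_square)
  finally show ?thesis .
qed



lemma frob_expand:
  fixes M :: "'a \<Rightarrow> 'a \<Rightarrow> real" and f :: "'a \<Rightarrow> real"
  assumes B: "finite B"
  shows "(\<Sum>i\<in>B. \<Sum>j\<in>B. (M i j + c * (f i * f j) - l * (if i = j then 1 else 0))\<^sup>2)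
    = (\<Sum>i\<in>B. \<Sum>j\<in>B. (M i j)\<^sup>2) + c\<^sup>2 * (\<Sum>i\<in>B. (f i)\<^sup>2)\<^sup>2 + real (card B) * l\<^sup>2
      + 2 * c * (\<Sum>i\<in>B. \<Sum>j\<in>B. f i * f j * M i j) - 2 * l * (\<Sum>i\<in>B. M i i)
      - 2 * c * l * (\<Sum>i\<in>B. (f i)\<^sup>2)"
proof -
  have e: "(M i j + c * (f i * f j) - l * (if i = j then 1 else 0))\<^sup>2
     = (M i j)\<^sup>2 + c\<^sup>2 * ((f i)\<^sup>2 * (f j)\<^sup>2) + 2 * c * (f i * f j * M i j)
       + (if i = j then l\<^sup>2 - 2 * l * M i i - 2 * c * l * (f i)\<^sup>2 else 0)" for i j
    by (auto simp: power2_eq_square algebra_simps)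
  have s2: "(\<Sum>i\<in>B. (f i)\<^sup>2)\<^sup>2 = (\<Sum>i\<in>B. \<Sum>j\<in>B. (f i)\<^sup>2 * (f j)\<^sup>2)"
    by (simp add: power2_eq_square[of "sum _ _"] sum_product)
  show ?thesis
    unfolding e
    by (simp add: sum.distrib sum_distrib_left s2 sum_subtractf B algebra_simps)
qed

lemma alg_main:
  fixes M :: "'a \<Rightarrow> 'a \<Rightarrow> real" and f :: "'a \<Rightarrow> real" and q w :: real
  assumes B: "finite B" and N: "card B = 2 * n" and n: "n \<ge> 1"
    and w: "(\<Sum>i\<in>B. (f i)\<^sup>2) < w"
    and q: "q > -1" and q0: "q \<noteq> 0"
    and eq: "(\<Sum>i\<in>B. M i i) * w + q * (\<Sum>i\<in>B. \<Sum>j\<in>B. f i * f j * M i j) = 0"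
  shows "(real n / q\<^sup>2 + 1 / q - (real n - 1)) * (\<Sum>i\<in>B. M i i)\<^sup>2
     \<le> (2 * real n - 1) / 2 * ((\<Sum>i\<in>B. \<Sum>j\<in>B. (M i j)\<^sup>2) - (\<Sum>i\<in>B. M i i)\<^sup>2)"
proof -
  define F where "F = (\<Sum>i\<in>B. \<Sum>j\<in>B. (M i j)\<^sup>2)"
  define S where "S = (\<Sum>i\<in>B. (f i)\<^sup>2)"
  define P where "P = (\<Sum>i\<in>B. \<Sum>j\<in>B. f i * f j * M i j)"
  define a where "a = (\<Sum>i\<in>B. M i i)"
  have F0: "F \<ge> 0" unfolding F_def by (intro sum_nonneg) auto
  have S0: "S \<ge> 0" unfolding S_def by (intro sum_nonneg) auto
  have w0: "w > 0" using w S0 S_def by linarith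
  have Q: "F + c\<^sup>2 * S\<^sup>2 + real (2*n) * l\<^sup>2 + 2 * c * P - 2 * l * a - 2 * c * l * S \<ge> 0" for c l
  proof -
    have "0 \<le> (\<Sum>i\<in>B. \<Sum>j\<in>B. (M i j + c * (f i * f j) - l * (if i = j then 1 else 0))\<^sup>2)"
      by (intro sum_nonneg) auto
    then show ?thesis using frob_expand[OF B, of M c f l] N
      unfolding F_def S_def P_def a_def by simp
  qed
  have aw: "a * w + q * P = 0" using eq unfolding a_def P_def .
  define m where "m = P / w"
  have am: "a = - q * m" using aw w0 unfolding m_def by (simp add: field_simps)
  have goal: "(2 * real n + 2 * q + q\<^sup>2) * m\<^sup>2 \<le> (2 * real n - 1) * F"
  proof (cases "P = 0")
    case True
    then show ?thesis using F0 n by (simp add: m_def)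
  next
    case False
    have "S \<noteq> 0"
    proof
      assume "S = 0"
      then have "\<forall>i\<in>B. f i = 0" using B unfolding S_def by (simp add: sum_nonneg_eq_0_iff)
      then have "P = 0" unfolding P_def by simp
      then show False using False by simp
    qed
    then have Sp: "S > 0" using S0 by simp
    define s where "s = S / w"
    have s0: "0 < s" "s < 1" using Sp w0 w unfolding s_def S_def by auto
    define \<mu> where "\<mu> = P / S"
    have ms: "m = s * \<mu>" unfolding m_def s_def \<mu>_def using Sp w0 by (simp add: field_simps)
    define l where "l = (a - \<mu>) / (2 * real n - 1)"
    define c where "c = (l - \<mu>) / S"
    have Q1: "F + c\<^sup>2 * S\<^sup>2 + real (2*n) * l\<^sup>2 + 2 * c * P - 2 * l * a - 2 * c * l * S \<ge> 0"
      by (rule Q)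
    have cS: "c * S = l - \<mu>" unfolding c_def using Sp by simp
    have PS: "P = \<mu> * S" unfolding \<mu>_def using Sp by simp
    have "F + (l - \<mu>)\<^sup>2 + real (2*n) * l\<^sup>2 + 2 * (l - \<mu>) * \<mu> - 2 * l * a - 2 * (l - \<mu>) * l \<ge> 0"
      using Q1 unfolding PS by (simp add: power2_eq_square cS[symmetric] algebra_simps)
    then have "F - \<mu>\<^sup>2 + (2 * real n - 1) * l\<^sup>2 - 2 * l * (a - \<mu>) \<ge> 0"
      by (simp add: power2_eq_square algebra_simps)
    then have "(2 * real n - 1) * (F - \<mu>\<^sup>2 + (2 * real n - 1) * l\<^sup>2 - 2 * l * (a - \<mu>)) \<ge> 0"
      using n by simp
    moreover have "(2 * real n - 1) * (F - \<mu>\<^sup>2 + (2 * real n - 1) * l\<^sup>2 - 2 * l * (a - \<mu>))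
       = (2 * real n - 1) * (F - \<mu>\<^sup>2) + ((2 * real n - 1) * l)\<^sup>2 - 2 * ((2 * real n - 1) * l) * (a - \<mu>)"
      by (simp add: power2_eq_square algebra_simps)
    ultimately have K0: "0 \<le> (2 * real n - 1) * (F - \<mu>\<^sup>2) + ((2 * real n - 1) * l)\<^sup>2 - 2 * ((2 * real n - 1) * l) * (a - \<mu>)"
      by linarith
    have "(2 * real n - 1) * l = a - \<mu>" unfolding l_def using n by simp
    then have "(2 * real n - 1) * (F - \<mu>\<^sup>2) + ((2 * real n - 1) * l)\<^sup>2 - 2 * ((2 * real n - 1) * l) * (a - \<mu>)
        = (2 * real n - 1) * (F - \<mu>\<^sup>2) - (a - \<mu>)\<^sup>2"
      by (simp only:) (simp add: power2_eq_square algebra_simps)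
    then have K: "(2 * real n - 1) * (F - \<mu>\<^sup>2) \<ge> (a - \<mu>)\<^sup>2"
      using K0 by linarith
    have D: "(a - \<mu>)\<^sup>2 + (2 * real n - 1) * \<mu>\<^sup>2 - ((a - m)\<^sup>2 + (2 * real n - 1) * m\<^sup>2)
       = (1 - s) * \<mu>\<^sup>2 * (2 * real n * (1 + s) + 2 * q * s)"
      unfolding am ms by (simp add: power2_eq_square algebra_simps)
    have "2 * real n * (1 + s) + 2 * q * s \<ge> 0"
    proof -
      have h1: "(real n - 1) * (1 + s) \<ge> 0" using n s0 by (intro mult_nonneg_nonneg) auto
      have h2: "(q + 1) * s \<ge> 0" using q s0 by (intro mult_nonneg_nonneg) auto
      have "2 * real n * (1 + s) + 2 * q * s = 2 * ((real n - 1) * (1 + s)) + 2 * ((q + 1) * s) + 2"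
        by (simp add: algebra_simps)
      then show ?thesis using h1 h2 by linarith
    qed
    then have "(1 - s) * \<mu>\<^sup>2 * (2 * real n * (1 + s) + 2 * q * s) \<ge> 0"
      using s0 by (intro mult_nonneg_nonneg) auto
    moreover have "(2 * real n + 2 * q + q\<^sup>2) * m\<^sup>2 = (a - m)\<^sup>2 + (2 * real n - 1) * m\<^sup>2"
      unfolding am by (simp add: power2_eq_square algebra_simps)
    moreover have "(2 * real n - 1) * (F - \<mu>\<^sup>2) = (2 * real n - 1) * F - (2 * real n - 1) * \<mu>\<^sup>2"
      by (simp add: right_diff_distrib)
    ultimately show ?thesis using D K by linarith
  qed
  have a2: "a\<^sup>2 = q\<^sup>2 * m\<^sup>2" unfolding am by (simp add: power2_eq_square)
  have "(2 * real n - 1) / 2 * (F - a\<^sup>2) - (real n / q\<^sup>2 + 1 / q - (real n - 1)) * a\<^sup>2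
     = ((2 * real n - 1) * F - (2 * real n + 2 * q + q\<^sup>2) * m\<^sup>2) / 2"
    unfolding a2 using q0 by (simp add: field_simps power2_eq_square)
  then show ?thesis using goal unfolding F_def[symmetric] a_def[symmetric] by simp
qed



lemma pde_identity:
  fixes ue :: "('n::finite) heis \<Rightarrow> real"
  assumes sm: "smooth_on U ue" and U: "open U" and x: "x \<in> U" and eps: "0 < \<epsilon>"
    and eq: "(\<Sum>e\<in>Basis. hder e (\<lambda>y. (\<epsilon> + (norm (hgrad ue y))\<^sup>2) powr ((p - 2) / 2) * hder e ue y) x) = 0"
  shows "hlap ue x * (\<epsilon> + (\<Sum>b\<in>Basis. (hder b ue x)\<^sup>2)) + (p - 2) *
      (\<Sum>i\<in>Basis. \<Sum>j\<in>Basis. hder i ue x * hder j ue x * hder i (hder j ue) x) = 0"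
proof -
  define r where "r = (p - 2) / 2"
  define g where "g y = \<epsilon> + (\<Sum>b\<in>Basis. (hder b ue y)\<^sup>2)" for y
  define Df where "Df b = frechet_derivative (hder b ue) (at x)" for b
  have hd: "(hder b ue has_derivative Df b) (at x)" if "b \<in> Basis" for b
    unfolding Df_def using smooth_hder_diff[OF sm U x that] frechet_derivative_works by blast
  have g0: "g x > 0" unfolding g_def using eps by (smt (verit) sum_nonneg zero_le_power2)
  have gd: "(g has_derivative (\<lambda>h. \<Sum>b\<in>Basis. 2 * hder b ue x * Df b h)) (at x)"
  proof -
    have pw: "((\<lambda>y. (hder b ue y)\<^sup>2) has_derivative (\<lambda>h. 2 * hder b ue x * Df b h)) (at x)"
      if "b \<in> Basis" for b
      by (rule has_derivative_eq_rhs[OF has_derivative_power[OF hd[OF that], of 2]]) (auto simp: algebra_simps)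
    have "((\<lambda>y. \<Sum>b\<in>Basis. (hder b ue y)\<^sup>2) has_derivative (\<lambda>h. \<Sum>b\<in>Basis. 2 * hder b ue x * Df b h)) (at x)"
      by (rule has_derivative_sum) (rule pw)
    then show ?thesis unfolding g_def
      by (rule has_derivative_eq_rhs[OF has_derivative_add[OF has_derivative_const]]) simp
  qed
  have Gd: "((\<lambda>y. g y powr r) has_derivative
      (\<lambda>h. g x powr r * (0 * ln (g x) + (\<Sum>b\<in>Basis. 2 * hder b ue x * Df b h) * r / g x))) (at x)"
    by (rule has_derivative_powr[OF gd has_derivative_const g0]) simp
  have trm: "hder e (\<lambda>y. (\<epsilon> + (norm (hgrad ue y))\<^sup>2) powr r * hder e ue y) x
     = g x powr r * (hder e (hder e ue) x + (2 * r / g x) * (\<Sum>b\<in>Basis. hder e ue x * hder b ue x * hder e (hder b ue) x))"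
    if e: "e \<in> Basis" for e
  proof -
    have fe: "(\<lambda>y. (\<epsilon> + (norm (hgrad ue y))\<^sup>2) powr r * hder e ue y) = (\<lambda>y. g y powr r * hder e ue y)"
      unfolding g_def norm_hgrad_sq ..
    have "((\<lambda>y. g y powr r * hder e ue y) has_derivative
       (\<lambda>h. g x powr r * Df e h + (g x powr r * (0 * ln (g x) + (\<Sum>b\<in>Basis. 2 * hder b ue x * Df b h) * r / g x)) * hder e ue x)) (at x)"
      by (rule has_derivative_mult[OF Gd hd[OF e]])
    then have "hder e (\<lambda>y. g y powr r * hder e ue y) x
      = g x powr r * Df e (hfield e x) + (g x powr r * (0 * ln (g x) + (\<Sum>b\<in>Basis. 2 * hder b ue x * Df b (hfield e x)) * r / g x)) * hder e ue x"
      unfolding hder_def by (simp add: frechet_derivative_at[symmetric])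
    also have "\<dots> = g x powr r * (hder e (hder e ue) x + (2 * r / g x) * (\<Sum>b\<in>Basis. hder e ue x * hder b ue x * hder e (hder b ue) x))"
      unfolding Df_def hder_def[symmetric]
      by (simp add: sum_distrib_left sum_divide_distrib algebra_simps)
    finally show ?thesis using fe by simp
  qed
  have "0 = (\<Sum>e\<in>Basis. g x powr r * (hder e (hder e ue) x + (2 * r / g x) * (\<Sum>b\<in>Basis. hder e ue x * hder b ue x * hder e (hder b ue) x)))"
    using eq trm unfolding r_def by simp
  also have "\<dots> = g x powr r * (hlap ue x + (2 * r / g x) * (\<Sum>i\<in>Basis. \<Sum>j\<in>Basis. hder i ue x * hder j ue x * hder i (hder j ue) x))"
    unfolding hlap_def by (simp only: sum.distrib sum_distrib_left distrib_left)
  finally have "hlap ue x + (2 * r / g x) * (\<Sum>i\<in>Basis. \<Sum>j\<in>Basis. hder i ue x * hder j ue x * hder i (hder j ue) x) = 0"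
    using g0 by simp
  then have Z: "hlap ue x + ((p - 2) / g x) * (\<Sum>i\<in>Basis. \<Sum>j\<in>Basis. hder i ue x * hder j ue x * hder i (hder j ue) x) = 0"
  proof -
    have r2: "2 * r = p - 2" unfolding r_def by simp
    show ?thesis using \<open>hlap ue x + (2 * r / g x) * _ = 0\<close> unfolding r2 .
  qed
  have "hlap ue x * g x + (p - 2) * (\<Sum>i\<in>Basis. \<Sum>j\<in>Basis. hder i ue x * hder j ue x * hder i (hder j ue) x)
     = g x * (hlap ue x + ((p - 2) / g x) * (\<Sum>i\<in>Basis. \<Sum>j\<in>Basis. hder i ue x * hder j ue x * hder i (hder j ue) x))"
    using g0 by (simp add: field_simps)
  then show ?thesis using Z unfolding g_def by simp
qed


lemma aux_half: "1 \<le> (c::real) \<Longrightarrow> 0 \<le> (2 * c - 1) / 2" by (simp add: field_simps)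

theorem lemma3p1:
  fixes p \<epsilon> :: real and \<Omega> U :: "('n::finite) heis set" and u ue :: "'n heis \<Rightarrow> real"
  assumes "1 < p" and "0 < \<epsilon>" and "\<epsilon> < 1"
    and "open \<Omega>" and "connected \<Omega>" and "\<Omega> \<noteq> {}"
    and "p_harmonic p \<Omega> u"
    and "smooth_domain U" and "compact (closure U)" and "closure U \<subseteq> \<Omega>"
    and "smooth_on U ue"
    and "\<forall>x\<in>U. (\<Sum>e\<in>Basis. hder e (\<lambda>y. (\<epsilon> + (norm (hgrad ue y))\<^sup>2) powr ((p - 2) / 2) * hder e ue y) x) = 0"
    and "HW0 p U (\<lambda>x. ue x - u x)"
  shows "\<forall>x\<in>U. coef (real CARD('n)) p * ereal ((hlap ue x)\<^sup>2)
           \<le> ereal ((2 * real CARD('n) - 1) / 2 * (hhess_sq ue x - (hlap ue x)\<^sup>2))"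
proof
  fix x assume x: "x \<in> U"
  have U: "open U" using assms(8) unfolding smooth_domain_def by blast
  have PDE: "hlap ue x * (\<epsilon> + (\<Sum>b\<in>Basis. (hder b ue x)\<^sup>2)) + (p - 2) *
      (\<Sum>i\<in>Basis. \<Sum>j\<in>Basis. hder i ue x * hder j ue x * hder i (hder j ue) x) = 0"
    using pde_identity[OF assms(11) U x assms(2)] assms(12) x by blast
  define H where "H i j = hder i (hder j ue) x" for i j :: "(real^'n) \<times> (real^'n)"
  define M where "M i j = (H i j + H j i) / 2" for i j
  define f where "f i = hder i ue x" for i :: "(real^'n) \<times> (real^'n)"
  have lap: "hlap ue x = (\<Sum>i\<in>Basis. M i i)" unfolding hlap_def M_def H_def by simp
  have hs: "hhess_sq ue x = (\<Sum>i\<in>Basis. \<Sum>j\<in>Basis. (M i j)\<^sup>2)" unfolding hhess_sq_def M_def H_def ..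
  have hs0: "hhess_sq ue x \<ge> 0" unfolding hs by (intro sum_nonneg) auto
  have Peq: "(\<Sum>i\<in>Basis. \<Sum>j\<in>Basis. f i * f j * M i j) = (\<Sum>i\<in>Basis. \<Sum>j\<in>Basis. f i * f j * H i j)"
  proof -
    have "(\<Sum>i\<in>Basis. \<Sum>j\<in>Basis. f i * f j * M i j)
       = ((\<Sum>i\<in>Basis. \<Sum>j\<in>Basis. f i * f j * H i j) + (\<Sum>i\<in>Basis. \<Sum>j\<in>Basis. f i * f j * H j i)) / 2"
    proof -
      have pt: "f i * f j * M i j = (f i * f j * H i j) / 2 + (f i * f j * H j i) / 2" for i j
        by (simp add: M_def field_simps)
      show ?thesis by (simp only: pt sum.distrib sum_divide_distrib[symmetric] add_divide_distrib)
    qed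
    also have "(\<Sum>i\<in>Basis. \<Sum>j\<in>Basis. f i * f j * H j i) = (\<Sum>i\<in>Basis. \<Sum>j\<in>Basis. f i * f j * H i j)"
      by (subst sum.swap) (simp add: algebra_simps)
    finally show ?thesis by simp
  qed
  have S0: "(\<Sum>b\<in>Basis. (f b)\<^sup>2) \<ge> 0" by (intro sum_nonneg) auto
  have wpos: "\<epsilon> + (\<Sum>b\<in>Basis. (f b)\<^sup>2) > 0" using S0 assms(2) by linarith
  have eq: "(\<Sum>i\<in>Basis. M i i) * (\<epsilon> + (\<Sum>b\<in>Basis. (f b)\<^sup>2)) + (p - 2) * (\<Sum>i\<in>Basis. \<Sum>j\<in>Basis. f i * f j * M i j) = 0"
    unfolding Peq lap[symmetric] unfolding f_def H_def using PDE .
  have card: "card (Basis :: ((real^'n) \<times> (real^'n)) set) = 2 * CARD('n)" by simp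
  have ncard: "CARD('n) \<ge> 1" by (simp add: Suc_leI)
  show "coef (real CARD('n)) p * ereal ((hlap ue x)\<^sup>2)
           \<le> ereal ((2 * real CARD('n) - 1) / 2 * (hhess_sq ue x - (hlap ue x)\<^sup>2))"
  proof (cases "p = 2")
    case True
    then have "hlap ue x = 0" using PDE wpos unfolding f_def by simp
    moreover have "(2 * real CARD('n) - 1) / 2 * hhess_sq ue x \<ge> 0"
    proof -
      have "real CARD('n) \<ge> 1" using ncard by linarith
      then have "(2 * real CARD('n) - 1) / 2 \<ge> 0"
        using aux_half[of "real CARD('n)"] by blast
      then show ?thesis using hs0 by (rule mult_nonneg_nonneg)
    qed
    ultimately show ?thesis by (simp add: zero_ereal_def[symmetric])
  next
    case False
    have "(real CARD('n) / (p - 2)\<^sup>2 + 1 / (p - 2) - (real CARD('n) - 1)) * (\<Sum>i\<in>Basis. M i i)\<^sup>2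
     \<le> (2 * real CARD('n) - 1) / 2 * ((\<Sum>i\<in>Basis. \<Sum>j\<in>Basis. (M i j)\<^sup>2) - (\<Sum>i\<in>Basis. M i i)\<^sup>2)"
      by (rule alg_main[OF finite_Basis card ncard _ _ _ eq]) (use assms(1) assms(2) False in auto)
    then show ?thesis using False unfolding coef_def lap[symmetric] hs[symmetric] by simp
  qed
qed

end
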